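(* Let $K\in\mathbb{N}_+$, let $\mathcal{H}$ be a separable real RKHS over a non-empty set $\mathcal{X}$ with reproducing kernel $\kappa$ that admits a complete interpolating sampling sequence $\{x_\lambda\}_{\lambda\in\Lambda}\subseteq\mathcal{X}$, and let $\mathcal{K}\subseteq\mathcal{H}$ be non-empty and locally compact. Then the set of restrictions to $\mathcal{K}$ of sampling-based neural operators $\hat f:\mathcal{H}\to\mathbb{R}^K$ is dense in $C(\mathcal{K},\mathbb{R}^K)$ for the compact-open topology (uniform convergence on compact subsets).
   Context: A sequence $\{x_\lambda\}_{\lambda\in\Lambda}\subseteq\mathcal{X}$, $\Lambda\subseteq\mathbb{N}$, is sampling if there is $C\ge1$ with $\|f\|/C\le(\sum_{\lambda}|f(x_\lambda)|^2)^{1/2}\le C\|f\|$ for all $f\in\mathcal{H}$; it is interpolating if for every square-summable $(v_\lambda)$ there is $f\in\mathcal{H}$ with $f(x_\lambda)=v_\lambda$ for all $\lambda$; complete interpolating sampling means both. A map $\hat f:\mathcal{H}\to\mathbb{R}^K$ is a sampling-based neural operator (SNO) if there exist $S,L\in\mathbb{N}_+$, points $x_1,\dots,x_S\in\mathcal{X}$, integers $d_0=S,d_1,\dots,d_{L+1}=K$ and affine maps $A_l:\mathbb{R}^{d_l}\to\mathbb{R}^{d_{l+1}}$ such that for all $f\in\mathcal{H}$, $\hat f(f)=A_L\circ(\mathrm{ReLU}\bullet A_{L-1})\circ\cdots\circ(\mathrm{ReLU}\bullet A_1)\big((\langle f,\kappa(\cdot,x_s)\rangle_{\mathcal{H}})_{s=1}^S\big)$,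 with $\mathrm{ReLU}(t)=\max\{t,0\}$ applied componentwise. *)

theory Defs
  imports "HOL-Analysis.Analysis"
begin

text \<open>An RKHS over the (non-empty) index type 'x is modelled as a real Hilbert space 'h
  together with the kernel sections phi x = kappa(.,x) in 'h; an element f is identified
  with the function (\<lambda>x. f \<bullet> phi x) (reproducing property), and this identification must
  be injective, i.e. the elements of 'h really are functions on 'x.\<close>

definition rkhs :: "('x \<Rightarrow> 'h::{real_inner,complete_space}) \<Rightarrow> bool" where
  "rkhs phi \<longleftrightarrow> (\<forall>f g. (\<forall>x. f \<bullet> phi x = g \<bullet> phi x) \<longrightarrow> f = g)"

definition kernel :: "('x \<Rightarrow> 'h::real_inner) \<Rightarrow> 'x \<Rightarrow> 'x \<Rightarrow> real" where
  "kernel phi x y = phi y \<bullet> phi x"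

definition separable_space :: "'h::metric_space itself \<Rightarrow> bool" where
  "separable_space _ \<longleftrightarrow> (\<exists>D::'h set. countable D \<and> closure D = UNIV)"

definition sampling_seq ::
  "('x \<Rightarrow> 'h::real_inner) \<Rightarrow> nat set \<Rightarrow> (nat \<Rightarrow> 'x) \<Rightarrow> bool" where
  "sampling_seq phi \<Lambda> xs \<longleftrightarrow> (\<exists>C\<ge>1. \<forall>f::'h.
      (\<lambda>l. (f \<bullet> phi (xs l))\<^sup>2) summable_on \<Lambda> \<and>
      norm f / C \<le> sqrt (\<Sum>\<^sub>\<infinity>l\<in>\<Lambda>. (f \<bullet> phi (xs l))\<^sup>2) \<and>
      sqrt (\<Sum>\<^sub>\<infinity>l\<in>\<Lambda>. (f \<bullet> phi (xs l))\<^sup>2) \<le> C * norm f)"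

definition interpolating_seq ::
  "('x \<Rightarrow> 'h::real_inner) \<Rightarrow> nat set \<Rightarrow> (nat \<Rightarrow> 'x) \<Rightarrow> bool" where
  "interpolating_seq phi \<Lambda> xs \<longleftrightarrow> (\<forall>v::nat \<Rightarrow> real.
      (\<lambda>l. (v l)\<^sup>2) summable_on \<Lambda> \<longrightarrow> (\<exists>f::'h. \<forall>l\<in>\<Lambda>. f \<bullet> phi (xs l) = v l))"

definition complete_interpolating_sampling ::
  "('x \<Rightarrow> 'h::real_inner) \<Rightarrow> nat set \<Rightarrow> (nat \<Rightarrow> 'x) \<Rightarrow> bool" where
  "complete_interpolating_sampling phi \<Lambda> xs \<longleftrightarrow>
     sampling_seq phi \<Lambda> xs \<and> interpolating_seq phi \<Lambda> xs"

text \<open>Vectors of R^d are represented as nat \<Rightarrow> real, only the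
  first d coordinates being meaningful (others are set to 0). The widths are
  ds = [d_0, d_1, ..., d_{L-1}] with d_0 = S; hidden layer l (l < L-1) is
  ReLU o A_l with A_l : R^{d_l} \<rightarrow> R^{d_(l+1)}, A_l v = W l v + b l; the output layer is
  an affine map R^{d_(L-1)} \<rightarrow> R^K = real^'k.\<close>

definition relu :: "real \<Rightarrow> real" where
  "relu t = max t 0"

definition hidden_layer ::
  "nat \<Rightarrow> nat \<Rightarrow> (nat \<Rightarrow> nat \<Rightarrow> real) \<Rightarrow> (nat \<Rightarrow> real) \<Rightarrow> (nat \<Rightarrow> real) \<Rightarrow> (nat \<Rightarrow> real)" where
  "hidden_layer din dout W b v =
     (\<lambda>i. if i < dout then relu ((\<Sum>j<din. W i j * v j) + b i) else 0)"

definition hidden_layers ::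
  "nat list \<Rightarrow> (nat \<Rightarrow> nat \<Rightarrow> nat \<Rightarrow> real) \<Rightarrow> (nat \<Rightarrow> nat \<Rightarrow> real) \<Rightarrow> (nat \<Rightarrow> real) \<Rightarrow> (nat \<Rightarrow> real)" where
  "hidden_layers ds Ws bs v0 =
     foldl (\<lambda>u l. hidden_layer (ds ! l) (ds ! Suc l) (Ws l) (bs l) u) v0 [0..<length ds - 1]"

definition output_layer ::
  "nat \<Rightarrow> ('k::finite \<Rightarrow> nat \<Rightarrow> real) \<Rightarrow> real^'k \<Rightarrow> (nat \<Rightarrow> real) \<Rightarrow> real^'k" where
  "output_layer d Wout bout v = (\<chi> k. (\<Sum>j<d. Wout k j * v j) + bout $ k)"

definition SNO :: "('x \<Rightarrow> 'h::real_inner) \<Rightarrow> ('h \<Rightarrow> real^'k::finite) \<Rightarrow> bool" where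
  "SNO phi F \<longleftrightarrow> (\<exists>S (pts::nat \<Rightarrow> 'x) (ds::nat list) Ws bs Wout bout.
      S > 0 \<and> ds \<noteq> [] \<and> hd ds = S \<and>
      (\<forall>f. F f = output_layer (last ds) Wout bout
                   (hidden_layers ds Ws bs (\<lambda>s. if s < S then f \<bullet> phi (pts s) else 0))))"

end

theory Submission
  imports Defs
begin

definition v0 :: "('x \<Rightarrow> 'h::real_inner) \<Rightarrow> nat \<Rightarrow> (nat \<Rightarrow> 'x) \<Rightarrow> 'h \<Rightarrow> nat \<Rightarrow> real" where
  "v0 phi S pts f = (\<lambda>s. if s < S then f \<bullet> phi (pts s) else 0)"

definition Rd :: "('x \<Rightarrow> 'h::real_inner) \<Rightarrow> nat \<Rightarrow> (nat \<Rightarrow> 'x) \<Rightarrow> nat list \<Rightarrow>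
   (nat \<Rightarrow> nat \<Rightarrow> nat \<Rightarrow> real) \<Rightarrow> (nat \<Rightarrow> nat \<Rightarrow> real) \<Rightarrow> ('h \<Rightarrow> real) \<Rightarrow> bool" where
  "Rd phi S pts ds Ws bs h \<longleftrightarrow> (\<exists>c a. \<forall>f. h f =
      (\<Sum>j<last ds. c j * hidden_layers ds Ws bs (v0 phi S pts f) j) + a)"

definition GoodF :: "('x \<Rightarrow> 'h::real_inner) \<Rightarrow> nat \<Rightarrow> (nat \<Rightarrow> 'x) \<Rightarrow> ('h \<Rightarrow> real) set \<Rightarrow> bool" where
  "GoodF phi S pts A \<longleftrightarrow> (\<exists>ds Ws bs. ds \<noteq> [] \<and> hd ds = S \<and> (\<forall>h\<in>A. Rd phi S pts ds Ws bs h))"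

lemma Rd_lin:
  assumes "Rd phi S pts ds Ws bs h1" "Rd phi S pts ds Ws bs h2"
  shows "Rd phi S pts ds Ws bs (\<lambda>f. a + c1 * h1 f + c2 * h2 f)"
proof -
  obtain p1 q1 where 1: "\<forall>f. h1 f = (\<Sum>j<last ds. p1 j * hidden_layers ds Ws bs (v0 phi S pts f) j) + q1"
    using assms(1) unfolding Rd_def by blast
  obtain p2 q2 where 2: "\<forall>f. h2 f = (\<Sum>j<last ds. p2 j * hidden_layers ds Ws bs (v0 phi S pts f) j) + q2"
    using assms(2) unfolding Rd_def by blast
  show ?thesis unfolding Rd_def
    apply (rule exI[of _ "\<lambda>j. c1 * p1 j + c2 * p2 j"], rule exI[of _ "a + c1 * q1 + c2 * q2"])
    using 1 2 by (simp add: algebra_simps sum.distrib sum_distrib_left)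
qed

lemma Rd_unit:
  assumes "j < last ds"
  shows "Rd phi S pts ds Ws bs (\<lambda>f. hidden_layers ds Ws bs (v0 phi S pts f) j)"
  unfolding Rd_def
  apply (rule exI[of _ "\<lambda>i. if i = j then 1 else 0"], rule exI[of _ 0])
proof
  fix f
  have "\<And>i. (if i = j then 1 else 0) * hidden_layers ds Ws bs (v0 phi S pts f) i
     = (if i = j then hidden_layers ds Ws bs (v0 phi S pts f) i else 0)" by simp
  then show "hidden_layers ds Ws bs (v0 phi S pts f) j = (\<Sum>i<last ds. (if i = j then 1 else 0) * hidden_layers ds Ws bs (v0 phi S pts f) i) + 0"
    using assms by simp
qed

lemma Rd_cong: "Rd phi S pts ds Ws bs h \<Longrightarrow> (\<And>f. h f = h' f) \<Longrightarrow> Rd phi S pts ds Ws bs h'"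
proof -
  assume "Rd phi S pts ds Ws bs h" "\<And>f. h f = h' f"
  then show ?thesis by (metis ext)
qed

lemma hidden_layers_snoc:
  assumes "ds \<noteq> []"
  shows "hidden_layers (ds @ [m]) (Ws(length ds - 1 := W)) (bs(length ds - 1 := b)) v
       = hidden_layer (last ds) m W b (hidden_layers ds Ws bs v)"
proof -
  define n where "n = length ds - 1"
  have ln: "length ds = Suc n" using assms n_def by (cases ds) auto
  have l2: "length (ds @ [m]) - 1 = Suc n" using ln by simp
  have "foldl (\<lambda>u l. hidden_layer ((ds @ [m]) ! l) ((ds @ [m]) ! Suc l) ((Ws(n := W)) l) ((bs(n := b)) l) u) v [0..<n]
      = foldl (\<lambda>u l. hidden_layer (ds ! l) (ds ! Suc l) (Ws l) (bs l) u) v [0..<n]"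
    by (rule foldl_cong) (auto simp: nth_append ln)
  moreover have "(ds @ [m]) ! n = last ds" using ln assms by (simp add: nth_append last_conv_nth)
  moreover have "(ds @ [m]) ! Suc n = m" using ln by (simp add: nth_append)
  ultimately show ?thesis unfolding hidden_layers_def l2 n_def[symmetric] using ln
    by simp
qed


lemma relu_split: "relu x - relu (- x) = x" unfolding relu_def by simp

lemma GoodF_mono: "GoodF phi S pts B \<Longrightarrow> A \<subseteq> B \<Longrightarrow> GoodF phi S pts A"
  unfolding GoodF_def by blast

lemma GoodF_aff:
  assumes "GoodF phi S pts A" "h \<in> A"
  shows "GoodF phi S pts (insert (\<lambda>f. a + c * h f) A)"
proof -
  obtain ds Ws bs where "ds \<noteq> []" "hd ds = S" "\<forall>h\<in>A. Rd phi S pts ds Ws bs h"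
    using assms(1) unfolding GoodF_def by blast
  moreover have "Rd phi S pts ds Ws bs (\<lambda>f. a + c * h f + 0 * h f)"
    using Rd_lin calculation assms(2) by blast
  ultimately show ?thesis unfolding GoodF_def
    by (metis (no_types, lifting) Rd_cong add.right_neutral insert_iff mult_zero_left)
qed

lemma GoodF_inputs:
  assumes "S > 0"
  shows "GoodF phi S pts ((\<lambda>s f. f \<bullet> phi (pts s)) ` {..<S})"
  unfolding GoodF_def
proof (intro exI conjI ballI)
  show "[S] \<noteq> []" "hd [S] = S" by auto
  fix h assume "h \<in> (\<lambda>s f. f \<bullet> phi (pts s)) ` {..<S}"
  then obtain s where s: "s < S" "h = (\<lambda>f. f \<bullet> phi (pts s))" by auto
  have "Rd phi S pts [S] Ws bs (\<lambda>f. hidden_layers [S] Ws bs (v0 phi S pts f) s)"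
    using s by (intro Rd_unit) simp
  then show "Rd phi S pts [S] Ws bs h"
    by (rule Rd_cong) (simp add: s hidden_layers_def v0_def)
qed

lemma GoodF_maxmin:
  assumes fin: "finite A" and G: "GoodF phi S pts A" and h1: "h1 \<in> A" and h2: "h2 \<in> A"
  shows "GoodF phi S pts (insert (\<lambda>f. max (h1 f) (h2 f)) (insert (\<lambda>f. min (h1 f) (h2 f)) A))"
proof -
  obtain ds Ws bs where ds: "ds \<noteq> []" "hd ds = S" and R: "\<forall>h\<in>A. Rd phi S pts ds Ws bs h"
    using G unfolding GoodF_def by blast
  define E where "E f = hidden_layers ds Ws bs (v0 phi S pts f)" for f
  have "\<forall>h\<in>A. \<exists>p. \<forall>f. h f = (\<Sum>j<last ds. fst p j * E f j) + snd p"
    using R unfolding Rd_def E_def by force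
  from bchoice[OF this] obtain ca where
    ca: "\<forall>h\<in>A. \<forall>f. h f = (\<Sum>j<last ds. fst (ca h) j * E f j) + snd (ca h)" by blast
  define cf where "cf h = fst (ca h)" for h
  define af where "af h = snd (ca h)" for h
  have cf: "\<And>h f. h \<in> A \<Longrightarrow> h f = (\<Sum>j<last ds. cf h j * E f j) + af h"
    using ca unfolding cf_def af_def by blast
  obtain as where as: "set as = A" using finite_list fin by blast
  define m where "m = length as"
  define W where "W i j = (if i < m then cf (as!i) j else if i < 2*m then - cf (as!(i-m)) j else cf h1 j - cf h2 j)" for i j
  define b where "b i = (if i < m then af (as!i) else if i < 2*m then - af (as!(i-m)) else af h1 - af h2)" for i
  define ds' where "ds' = ds @ [2*m+1]"
  define Ws' where "Ws' = Ws(length ds - 1 := W)"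
  define bs' where "bs' = bs(length ds - 1 := b)"
  define E' where "E' f = hidden_layers ds' Ws' bs' (v0 phi S pts f)" for f
  have E'E: "E' f = hidden_layer (last ds) (2*m+1) W b (E f)" for f
    unfolding E'_def E_def ds'_def Ws'_def bs'_def by (rule hidden_layers_snoc[OF ds(1)])
  have lds': "last ds' = 2*m+1" "ds' \<noteq> []" "hd ds' = S" using ds by (auto simp: ds'_def)
  have RU: "Rd phi S pts ds' Ws' bs' (\<lambda>f. E' f i)" if "i < 2*m+1" for i
    unfolding E'_def using that lds'(1) by (intro Rd_unit) simp
  have v1: "E' f i = relu ((as!i) f)" if "i < m" for i f
  proof -
    have "as!i \<in> A" using as that m_def by auto
    then show ?thesis using that unfolding E'E hidden_layer_def W_def b_def
      using cf[of "as!i" f] by simp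
  qed
  have v2: "E' f (m+i) = relu (- (as!i) f)" if "i < m" for i f
  proof -
    have "as!i \<in> A" using as that m_def by auto
    then show ?thesis using that unfolding E'E hidden_layer_def W_def b_def
      using cf[of "as!i" f] by (simp add: sum_negf)
  qed
  have v3: "E' f (2*m) = relu (h1 f - h2 f)" for f
  proof -
    have "(\<Sum>j<last ds. W (2*m) j * E f j) + b (2*m) = ((\<Sum>j<last ds. cf h1 j * E f j) + af h1) - ((\<Sum>j<last ds. cf h2 j * E f j) + af h2)"
    proof -
      have w: "W (2*m) j = cf h1 j - cf h2 j" for j by (simp add: W_def)
      have bb: "b (2*m) = af h1 - af h2" by (simp add: b_def)
      have "(\<Sum>j<last ds. W (2*m) j * E f j) = (\<Sum>j<last ds. cf h1 j * E f j - cf h2 j * E f j)"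
        by (rule sum.cong) (simp_all add: w left_diff_distrib)
      also have "\<dots> = (\<Sum>j<last ds. cf h1 j * E f j) - (\<Sum>j<last ds. cf h2 j * E f j)"
        by (rule sum_subtractf)
      finally show ?thesis using bb by linarith
    qed
    note X = this
    have e: "E' f (2*m) = relu ((\<Sum>j<last ds. W (2*m) j * E f j) + b (2*m))"
      unfolding E'E hidden_layer_def by simp
    show ?thesis
      by (simp only: e X cf[OF h1, of f, symmetric] cf[OF h2, of f, symmetric])
  qed
  have RA: "Rd phi S pts ds' Ws' bs' h" if "h \<in> A" for h
  proof -
    have "h \<in> set as" using that as by simp
    then obtain i where i: "i < m" "h = as!i" unfolding m_def in_set_conv_nth by blast
    have r1: "Rd phi S pts ds' Ws' bs' (\<lambda>f. E' f i)" using i(1) by (intro RU) simp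
    have r2: "Rd phi S pts ds' Ws' bs' (\<lambda>f. E' f (m+i))" using i(1) by (intro RU) simp
    from Rd_lin[OF r1 r2, of 0 1 "-1"] show ?thesis
      by (rule Rd_cong) (simp add: v1 v2 i relu_split)
  qed
  have r3: "Rd phi S pts ds' Ws' bs' (\<lambda>f. E' f (2*m))" by (intro RU) simp
  have Rmax: "Rd phi S pts ds' Ws' bs' (\<lambda>f. max (h1 f) (h2 f))"
    using Rd_lin[OF RA[OF h2] r3, of 0 1 1] by (rule Rd_cong) (simp add: v3 relu_def)
  have Rmin: "Rd phi S pts ds' Ws' bs' (\<lambda>f. min (h1 f) (h2 f))"
    using Rd_lin[OF RA[OF h1] r3, of 0 1 "-1"] by (rule Rd_cong) (simp add: v3 relu_def)
  show ?thesis unfolding GoodF_def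
    apply (rule exI[of _ ds'], rule exI[of _ Ws'], rule exI[of _ bs'])
    using lds' RA Rmax Rmin by simp
qed


inductive_set Lat :: "('x \<Rightarrow> 'h::real_inner) \<Rightarrow> ('h \<Rightarrow> real) set" for phi where
  aff: "(\<lambda>f. a + c * (f \<bullet> phi x)) \<in> Lat phi"
| mx: "h1 \<in> Lat phi \<Longrightarrow> h2 \<in> Lat phi \<Longrightarrow> (\<lambda>f. max (h1 f) (h2 f)) \<in> Lat phi"
| mn: "h1 \<in> Lat phi \<Longrightarrow> h2 \<in> Lat phi \<Longrightarrow> (\<lambda>f. min (h1 f) (h2 f)) \<in> Lat phi"

lemma Lat_const: "(\<lambda>f. a) \<in> Lat phi"
  using Lat.aff[of a 0 phi undefined] by simp

lemma Lat_cont: "h \<in> Lat phi \<Longrightarrow> continuous_on UNIV h"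
  by (induction rule: Lat.induct) (auto intro!: continuous_intros)

lemma Lat_Min:
  assumes "finite I" "I \<noteq> {}" "\<forall>i\<in>I. h i \<in> Lat phi"
  shows "(\<lambda>f. Min ((\<lambda>i. h i f) ` I)) \<in> Lat phi"
  using assms
proof (induction I rule: finite_ne_induct)
  case (singleton x)
  then show ?case by simp
next
  case (insert x F)
  have "(\<lambda>f. min (h x f) (Min ((\<lambda>i. h i f) ` F))) \<in> Lat phi"
    using insert by (intro Lat.mn) auto
  then show ?case using insert by simp
qed

lemma Lat_Max:
  assumes "finite I" "I \<noteq> {}" "\<forall>i\<in>I. h i \<in> Lat phi"
  shows "(\<lambda>f. Max ((\<lambda>i. h i f) ` I)) \<in> Lat phi"
  using assms
proof (induction I rule: finite_ne_induct)
  case (singleton x)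
  then show ?case by simp
next
  case (insert x F)
  have "(\<lambda>f. max (h x f) (Max ((\<lambda>i. h i f) ` F))) \<in> Lat phi"
    using insert by (intro Lat.mx) auto
  then show ?case using insert by simp
qed

lemma Lat_interp:
  fixes phi :: "'x \<Rightarrow> 'h::{real_inner,complete_space}"
  assumes rk: "rkhs phi" and ne: "f1 \<noteq> f2"
  shows "\<exists>h. h \<in> Lat phi \<and> h f1 = a \<and> h f2 = b"
proof -
  obtain x where x: "f1 \<bullet> phi x \<noteq> f2 \<bullet> phi x" using rk ne unfolding rkhs_def by blast
  define d1 where "d1 = f1 \<bullet> phi x"
  define d2 where "d2 = f2 \<bullet> phi x"
  define t where "t = (b - a) / (d2 - d1)"
  have nz: "d2 - d1 \<noteq> 0" using x d1_def d2_def by simp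
  have "(\<lambda>f. (a - t * d1) + t * (f \<bullet> phi x)) \<in> Lat phi" by (rule Lat.aff)
  moreover have "(a - t * d1) + t * (f1 \<bullet> phi x) = a" unfolding d1_def[symmetric] by simp
  moreover have "(a - t * d1) + t * (f2 \<bullet> phi x) = b"
  proof -
    have "t * (d2 - d1) = b - a" unfolding t_def using nz by simp
    then show ?thesis unfolding d2_def[symmetric] by (simp add: algebra_simps)
  qed
  ultimately show ?thesis by blast
qed

lemma open_lemma:
  assumes "continuous_on C (u :: 'a::topological_space \<Rightarrow> real)"
  shows "\<exists>U. open U \<and> (\<forall>z\<in>C. z \<in> U \<longleftrightarrow> u z < e)"
proof -
  obtain A where "open A" "A \<inter> C = u -` {..<e} \<inter> C"
    using assms unfolding continuous_on_open_invariant by (meson open_lessThan)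
  then show ?thesis by blast
qed

lemma step1:
  fixes phi :: "'x \<Rightarrow> 'h::{real_inner,complete_space}"
  assumes rk: "rkhs phi" and C: "compact C" and g: "continuous_on C g" and e: "\<epsilon> > 0"
    and x: "x \<in> C"
  shows "\<exists>hx. hx \<in> Lat phi \<and> hx x = g x \<and> (\<forall>z\<in>C. hx z < g z + \<epsilon>)"
proof -
  have "\<forall>y\<in>C. \<exists>h. h \<in> Lat phi \<and> h x = g x \<and> h y = g y"
  proof
    fix y assume "y \<in> C"
    show "\<exists>h. h \<in> Lat phi \<and> h x = g x \<and> h y = g y"
    proof (cases "x = y")
      case True
      then show ?thesis using Lat_const[of "g x" phi] by auto
    next
      case False
      then show ?thesis using Lat_interp[OF rk False] by blast
    qed
  qed
  from bchoice[OF this] obtain hh where hh: "\<forall>y\<in>C. hh y \<in> Lat phi \<and> hh y x = g x \<and> hh y y = g y"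
    by blast
  have "\<forall>y\<in>C. \<exists>U. open U \<and> (\<forall>z\<in>C. z \<in> U \<longleftrightarrow> hh y z - g z < \<epsilon>)"
  proof
    fix y assume y: "y \<in> C"
    have "continuous_on C (hh y)" using hh y Lat_cont continuous_on_subset by blast
    then have "continuous_on C (\<lambda>z. hh y z - g z)" using g by (intro continuous_intros)
    then show "\<exists>U. open U \<and> (\<forall>z\<in>C. z \<in> U \<longleftrightarrow> hh y z - g z < \<epsilon>)" by (rule open_lemma)
  qed
  from bchoice[OF this] obtain UU where UU: "\<forall>y\<in>C. open (UU y) \<and> (\<forall>z\<in>C. z \<in> UU y \<longleftrightarrow> hh y z - g z < \<epsilon>)"
    by blast
  have cov: "C \<subseteq> (\<Union>y\<in>C. UU y)"
  proof
    fix z assume z: "z \<in> C"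
    then have "z \<in> UU z" using UU hh e by auto
    then show "z \<in> (\<Union>y\<in>C. UU y)" using z by blast
  qed
  obtain Y where Y: "Y \<subseteq> C" "finite Y" "C \<subseteq> (\<Union>y\<in>Y. UU y)"
    using compactE_image[OF C, of C UU] UU cov by blast
  have Yne: "Y \<noteq> {}" using Y(3) x by blast
  define hx where "hx z = Min ((\<lambda>y. hh y z) ` Y)" for z
  have "hx \<in> Lat phi" unfolding hx_def using Lat_Min[OF Y(2) Yne, of hh phi] Y(1) hh by blast
  moreover have "hx x = g x"
  proof -
    have "(\<lambda>y. hh y x) ` Y = {g x}" using Y(1) Yne hh by (auto simp: image_iff) (metis ex_in_conv subsetD)
    then show ?thesis unfolding hx_def by simp
  qed
  moreover have "\<forall>z\<in>C. hx z < g z + \<epsilon>"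
  proof
    fix z assume z: "z \<in> C"
    then obtain y where y: "y \<in> Y" "z \<in> UU y" using Y(3) by blast
    then have "hh y z - g z < \<epsilon>" using UU Y(1) z by blast
    moreover have "hx z \<le> hh y z" unfolding hx_def using Y(2) y(1) by simp
    ultimately show "hx z < g z + \<epsilon>" by linarith
  qed
  ultimately show ?thesis by blast
qed

lemma lattice_approx:
  fixes phi :: "'x \<Rightarrow> 'h::{real_inner,complete_space}"
  assumes rk: "rkhs phi" and C: "compact C" and g: "continuous_on C g" and e: "\<epsilon> > 0"
  shows "\<exists>h. h \<in> Lat phi \<and> (\<forall>f\<in>C. \<bar>h f - g f\<bar> < \<epsilon>)"
proof (cases "C = {}")
  case True
  then show ?thesis using Lat_const by blast
next
  case Cne: False
  have "\<forall>x\<in>C. \<exists>hx. hx \<in> Lat phi \<and> hx x = g x \<and> (\<forall>z\<in>C. hx z < g z + \<epsilon>)"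
    using step1[OF rk C g e] by blast
  from bchoice[OF this] obtain hh where hh: "\<forall>x\<in>C. hh x \<in> Lat phi \<and> hh x x = g x \<and> (\<forall>z\<in>C. hh x z < g z + \<epsilon>)"
    by blast
  have "\<forall>x\<in>C. \<exists>U. open U \<and> (\<forall>z\<in>C. z \<in> U \<longleftrightarrow> g z - hh x z < \<epsilon>)"
  proof
    fix y assume y: "y \<in> C"
    have "continuous_on C (hh y)" using hh y Lat_cont continuous_on_subset by blast
    then have "continuous_on C (\<lambda>z. g z - hh y z)" using g by (intro continuous_intros)
    then show "\<exists>U. open U \<and> (\<forall>z\<in>C. z \<in> U \<longleftrightarrow> g z - hh y z < \<epsilon>)" by (rule open_lemma)
  qed
  from bchoice[OF this] obtain UU where UU: "\<forall>y\<in>C. open (UU y) \<and> (\<forall>z\<in>C. z \<in> UU y \<longleftrightarrow> g z - hh y z < \<epsilon>)"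
    by blast
  have cov: "C \<subseteq> (\<Union>y\<in>C. UU y)"
  proof
    fix z assume z: "z \<in> C"
    then have "z \<in> UU z" using UU hh e by auto
    then show "z \<in> (\<Union>y\<in>C. UU y)" using z by blast
  qed
  obtain Y where Y: "Y \<subseteq> C" "finite Y" "C \<subseteq> (\<Union>y\<in>Y. UU y)"
    using compactE_image[OF C, of C UU] UU cov by blast
  have Yne: "Y \<noteq> {}" using Y(3) Cne by blast
  define h where "h z = Max ((\<lambda>y. hh y z) ` Y)" for z
  have "h \<in> Lat phi" unfolding h_def using Lat_Max[OF Y(2) Yne, of hh phi] Y(1) hh by blast
  moreover have "\<forall>z\<in>C. \<bar>h z - g z\<bar> < \<epsilon>"
  proof
    fix z assume z: "z \<in> C"
    then obtain y where y: "y \<in> Y" "z \<in> UU y" using Y(3) by blast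
    then have "g z - hh y z < \<epsilon>" using UU Y(1) z by blast
    moreover have "hh y z \<le> h z" unfolding h_def using Y(2) y(1) by simp
    moreover have "h z < g z + \<epsilon>"
    proof -
      have "h z \<in> (\<lambda>y. hh y z) ` Y" unfolding h_def using Y(2) Yne by (intro Max_in) auto
      then obtain y' where "y' \<in> Y" "h z = hh y' z" by blast
      then show ?thesis using hh Y(1) z by auto
    qed
    ultimately show "\<bar>h z - g z\<bar> < \<epsilon>" by linarith
  qed
  ultimately show ?thesis by blast
qed


definition Inp :: "('x \<Rightarrow> 'h::real_inner) \<Rightarrow> nat \<Rightarrow> (nat \<Rightarrow> 'x) \<Rightarrow> ('h \<Rightarrow> real) set" where
  "Inp phi S pts = (\<lambda>s f. f \<bullet> phi (pts s)) ` {..<S}"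

lemma Lat_good:
  assumes "h \<in> Lat phi"
  shows "\<exists>P. finite P \<and> (\<forall>S pts A. P \<subseteq> pts ` {..<S} \<longrightarrow> finite A \<longrightarrow>
           GoodF phi S pts (A \<union> Inp phi S pts) \<longrightarrow> GoodF phi S pts (insert h A \<union> Inp phi S pts))"
  using assms
proof (induction rule: Lat.induct)
  case (aff a c x)
  show ?case
  proof (intro exI[of _ "{x}"] conjI allI impI)
    fix S pts A
    assume x: "{x} \<subseteq> pts ` {..<S}" and G: "GoodF phi S pts (A \<union> Inp phi S pts)"
    then obtain s where s: "s < S" "x = pts s" by auto
    have "(\<lambda>f. f \<bullet> phi (pts s)) \<in> A \<union> Inp phi S pts" unfolding Inp_def using s by auto
    from GoodF_aff[OF G this, of a c]
    show "GoodF phi S pts (insert (\<lambda>f. a + c * (f \<bullet> phi x)) A \<union> Inp phi S pts)"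
      using s by simp
  qed simp
next
  case (mx h1 h2)
  obtain P1 where P1: "finite P1" "\<forall>S pts A. P1 \<subseteq> pts ` {..<S} \<longrightarrow> finite A \<longrightarrow>
           GoodF phi S pts (A \<union> Inp phi S pts) \<longrightarrow> GoodF phi S pts (insert h1 A \<union> Inp phi S pts)"
    using mx.IH(1) by blast
  obtain P2 where P2: "finite P2" "\<forall>S pts A. P2 \<subseteq> pts ` {..<S} \<longrightarrow> finite A \<longrightarrow>
           GoodF phi S pts (A \<union> Inp phi S pts) \<longrightarrow> GoodF phi S pts (insert h2 A \<union> Inp phi S pts)"
    using mx.IH(2) by blast
  show ?case
  proof (intro exI[of _ "P1 \<union> P2"] conjI allI impI)
    fix S pts A
    assume P: "P1 \<union> P2 \<subseteq> pts ` {..<S}" and fin: "finite A" and G: "GoodF phi S pts (A \<union> Inp phi S pts)"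
    have G1: "GoodF phi S pts (insert h1 A \<union> Inp phi S pts)" using P1 P fin G by blast
    have G2: "GoodF phi S pts (insert h2 (insert h1 A) \<union> Inp phi S pts)" using P2 P fin G1 by blast
    have finB: "finite (insert h2 (insert h1 A) \<union> Inp phi S pts)" using fin unfolding Inp_def by simp
    from GoodF_maxmin[OF finB G2, of h1 h2]
    show "GoodF phi S pts (insert (\<lambda>f. max (h1 f) (h2 f)) A \<union> Inp phi S pts)"
      by (rule GoodF_mono) auto
  qed (use P1 P2 in simp)
next
  case (mn h1 h2)
  obtain P1 where P1: "finite P1" "\<forall>S pts A. P1 \<subseteq> pts ` {..<S} \<longrightarrow> finite A \<longrightarrow>
           GoodF phi S pts (A \<union> Inp phi S pts) \<longrightarrow> GoodF phi S pts (insert h1 A \<union> Inp phi S pts)"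
    using mn.IH(1) by blast
  obtain P2 where P2: "finite P2" "\<forall>S pts A. P2 \<subseteq> pts ` {..<S} \<longrightarrow> finite A \<longrightarrow>
           GoodF phi S pts (A \<union> Inp phi S pts) \<longrightarrow> GoodF phi S pts (insert h2 A \<union> Inp phi S pts)"
    using mn.IH(2) by blast
  show ?case
  proof (intro exI[of _ "P1 \<union> P2"] conjI allI impI)
    fix S pts A
    assume P: "P1 \<union> P2 \<subseteq> pts ` {..<S}" and fin: "finite A" and G: "GoodF phi S pts (A \<union> Inp phi S pts)"
    have G1: "GoodF phi S pts (insert h1 A \<union> Inp phi S pts)" using P1 P fin G by blast
    have G2: "GoodF phi S pts (insert h2 (insert h1 A) \<union> Inp phi S pts)" using P2 P fin G1 by blast
    have finB: "finite (insert h2 (insert h1 A) \<union> Inp phi S pts)" using fin unfolding Inp_def by simp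
    from GoodF_maxmin[OF finB G2, of h1 h2]
    show "GoodF phi S pts (insert (\<lambda>f. min (h1 f) (h2 f)) A \<union> Inp phi S pts)"
      by (rule GoodF_mono) auto
  qed (use P1 P2 in simp)
qed


theorem mainTheorem7:
  fixes phi :: "'x \<Rightarrow> 'h::{real_inner,complete_space}"
    and \<Lambda> :: "nat set" and xs :: "nat \<Rightarrow> 'x"
    and \<K> :: "'h set"
  assumes "rkhs phi"
    and "separable_space TYPE('h)"
    and "complete_interpolating_sampling phi \<Lambda> xs"
    and "\<K> \<noteq> {}"
    and "locally_compact_space (top_of_set \<K>)"
  shows "\<forall>g :: 'h \<Rightarrow> real^'k::finite. continuous_on \<K> g \<longrightarrow>
           (\<forall>C \<epsilon>. compact C \<and> C \<subseteq> \<K> \<and> \<epsilon> > 0 \<longrightarrow>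
              (\<exists>F. SNO phi F \<and> (\<forall>f\<in>C. dist (F f) (g f) < \<epsilon>)))"
proof (intro allI impI)
  fix g :: "'h \<Rightarrow> real^'k" and C and \<epsilon> :: real
  assume gc: "continuous_on \<K> g" and CC: "compact C \<and> C \<subseteq> \<K> \<and> \<epsilon> > 0"
  have rk: "rkhs phi" using assms(1) .
  define n where "n = CARD('k)"
  have npos: "n > 0" unfolding n_def by simp
  define \<delta> where "\<delta> = \<epsilon> / n"
  have dpos: "\<delta> > 0" unfolding \<delta>_def using CC npos by simp
  have "\<forall>k. \<exists>h. h \<in> Lat phi \<and> (\<forall>f\<in>C. \<bar>h f - g f $ k\<bar> < \<delta>)"
  proof
    fix k
    have "continuous_on C (\<lambda>f. g f $ k)"
      using gc CC continuous_on_subset by (intro continuous_on_component) blast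
    then show "\<exists>h. h \<in> Lat phi \<and> (\<forall>f\<in>C. \<bar>h f - g f $ k\<bar> < \<delta>)"
      using lattice_approx[OF rk _ _ dpos] CC by blast
  qed
  then obtain H where H: "\<forall>k. H k \<in> Lat phi \<and> (\<forall>f\<in>C. \<bar>H k f - g f $ k\<bar> < \<delta>)"
    by (rule choice[THEN exE]) blast
  have "\<forall>k. \<exists>P. finite P \<and> (\<forall>S pts A. P \<subseteq> pts ` {..<S} \<longrightarrow> finite A \<longrightarrow>
           GoodF phi S pts (A \<union> Inp phi S pts) \<longrightarrow> GoodF phi S pts (insert (H k) A \<union> Inp phi S pts))"
    using H Lat_good by blast
  then obtain PP where PP: "\<forall>k. finite (PP k) \<and> (\<forall>S pts A. PP k \<subseteq> pts ` {..<S} \<longrightarrow> finite A \<longrightarrow>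
           GoodF phi S pts (A \<union> Inp phi S pts) \<longrightarrow> GoodF phi S pts (insert (H k) A \<union> Inp phi S pts))"
    by (rule choice[THEN exE]) blast
  define P where "P = (\<Union>k. PP k)"
  have "finite P" unfolding P_def using PP by simp
  then obtain L where L: "set L = P" using finite_list by blast
  define L' where "L' = undefined # L"
  define S where "S = length L'"
  define pts where "pts s = L' ! s" for s
  have Spos: "S > 0" unfolding S_def L'_def by simp
  have Pcov: "PP k \<subseteq> pts ` {..<S}" for k
  proof -
    have "set L' = pts ` {..<S}" unfolding pts_def S_def by (auto simp: set_conv_nth)
    then show ?thesis unfolding L'_def using L P_def by auto
  qed
  have G0: "GoodF phi S pts ({} \<union> Inp phi S pts)"
    using GoodF_inputs[OF Spos] unfolding Inp_def by simp
  have GK: "GoodF phi S pts (H ` K' \<union> Inp phi S pts)" if "finite K'" for K'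
    using that
  proof (induction K' rule: finite_induct)
    case empty
    then show ?case using G0 by simp
  next
    case (insert k K')
    have "GoodF phi S pts (insert (H k) (H ` K') \<union> Inp phi S pts)"
      using PP Pcov insert by blast
    then show ?case by simp
  qed
  have "GoodF phi S pts (H ` UNIV \<union> Inp phi S pts)" using GK[of UNIV] by simp
  then obtain ds Ws bs where ds: "ds \<noteq> []" "hd ds = S" and R: "\<forall>k. Rd phi S pts ds Ws bs (H k)"
    unfolding GoodF_def by blast
  define E where "E f = hidden_layers ds Ws bs (v0 phi S pts f)" for f
  have "\<forall>k. \<exists>p. \<forall>f. H k f = (\<Sum>j<last ds. fst p j * E f j) + snd p"
    using R unfolding Rd_def E_def by force
  then obtain pp where pp: "\<forall>k. \<forall>f. H k f = (\<Sum>j<last ds. fst (pp k) j * E f j) + snd (pp k)"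
    by (rule choice[THEN exE]) blast
  define F where "F f = output_layer (last ds) (\<lambda>k j. fst (pp k) j) (\<chi> k. snd (pp k))
                   (hidden_layers ds Ws bs (\<lambda>s. if s < S then f \<bullet> phi (pts s) else 0))" for f
  have SNO: "SNO phi F"
    unfolding SNO_def
    apply (rule exI[of _ S], rule exI[of _ pts], rule exI[of _ ds], rule exI[of _ Ws], rule exI[of _ bs])
    apply (rule exI[of _ "\<lambda>k j. fst (pp k) j"], rule exI[of _ "\<chi> k. snd (pp k)"])
    using Spos ds F_def by simp
  have Fk: "F f $ k = H k f" for f k
    using pp unfolding F_def output_layer_def E_def v0_def by simp
  have "\<forall>f\<in>C. dist (F f) (g f) < \<epsilon>"
  proof
    fix f assume f: "f \<in> C"
    have "dist (F f) (g f) = norm (F f - g f)" by (simp add: dist_norm)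
    also have "\<dots> \<le> (\<Sum>k\<in>UNIV. \<bar>(F f - g f) $ k\<bar>)" by (rule norm_le_l1_cart)
    also have "\<dots> < (\<Sum>k\<in>(UNIV::'k set). \<delta>)"
    proof (rule sum_strict_mono)
      fix k :: 'k
      show "\<bar>(F f - g f) $ k\<bar> < \<delta>" using H f Fk by simp
    qed auto
    also have "\<dots> = \<epsilon>" unfolding \<delta>_def n_def by simp
    finally show "dist (F f) (g f) < \<epsilon>" .
  qed
  then show "\<exists>F. SNO phi F \<and> (\<forall>f\<in>C. dist (F f) (g f) < \<epsilon>)" using SNO by blast
qed

end
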